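(* Let $1\leq p<\infty$ and let $N\geq 2$ be an integer. Let $p_1,\dots,p_N$ be positive integers such that $2p_s<p_t$ for all $1\leq s<t\leq N$, let $l_1,\dots,l_N$ be arbitrary integers, and let $\lambda_1,\dots,\lambda_N$ be real numbers such that $1<|\lambda_s|<|\lambda_t|$ for all $1\leq s<t\leq N$. For $1\leq i\leq N$ define $f_i:\mathbb{Z}\to\mathbb{Z}$ by $f_i(n)=n+p_i$, and define the weight sequence $w^{(i)}=(w^{(i)}_n)_{n\in\mathbb{Z}}$ by $w^{(i)}_n=\lambda_i$ if $n>l_i$ and $w^{(i)}_n=1/\lambda_i$ if $n\leq l_i$. Let $T_i=T_{f_i,w^{(i)}}$ be the corresponding bilateral weighted pseudo-shift on $\ell^p(\mathbb{Z})$. Then each $T_i$ is invertible, $T_1,\dots,T_N$ are disjoint hypercyclic, and $T_1^{-1},\dots,T_N^{-1}$ are also disjoint hypercyclic.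
   Context: $(e_j)_{j\in\mathbb{Z}}$ is the canonical basis of $\ell^p(\mathbb{Z})$. Bilateral weighted pseudo-shift: given an invertible map $f:\mathbb{Z}\to\mathbb{Z}$ and a bounded nonzero weight sequence $w=(w_j)_{j\in\mathbb{Z}}$, $T_{f,w}\big(\sum_{j\in\mathbb{Z}}x_je_j\big)=\sum_{j\in\mathbb{Z}}w_{f(j)}x_{f(j)}e_j$. Operators $T_1,\dots,T_N$ ($N\geq 2$) on a separable Banach space $X$ are disjoint hypercyclic if there is $x\in X$ such that $\{(T_1^nx,\dots,T_N^nx):n\in\mathbb{N}\}$ is dense in $X^N$. *)

theory Defs
  imports "HOL-Analysis.Analysis"
begin

definition lp :: "real \<Rightarrow> (int \<Rightarrow> real) set" where
  "lp p = {x. (\<lambda>j. \<bar>x j\<bar> powr p) summable_on UNIV}"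

definition lp_norm :: "real \<Rightarrow> (int \<Rightarrow> real) \<Rightarrow> real" where
  "lp_norm p x = (\<Sum>\<^sub>\<infinity>j. \<bar>x j\<bar> powr p) powr (1 / p)"

definition pseudo_shift :: "(int \<Rightarrow> int) \<Rightarrow> (int \<Rightarrow> real) \<Rightarrow> (int \<Rightarrow> real) \<Rightarrow> (int \<Rightarrow> real)" where
  "pseudo_shift f w x = (\<lambda>j. w (f j) * x (f j))"

definition bounded_linear_lp :: "real \<Rightarrow> ((int \<Rightarrow> real) \<Rightarrow> (int \<Rightarrow> real)) \<Rightarrow> bool" where
  "bounded_linear_lp p T \<longleftrightarrow>
     T ` lp p \<subseteq> lp p \<and>
     (\<forall>x\<in>lp p. \<forall>y\<in>lp p. \<forall>a b. T (\<lambda>j. a * x j + b * y j) = (\<lambda>j. a * T x j + b * T y j)) \<and>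
     (\<exists>C. \<forall>x\<in>lp p. lp_norm p (T x) \<le> C * lp_norm p x)"

definition invertible_lp :: "real \<Rightarrow> ((int \<Rightarrow> real) \<Rightarrow> (int \<Rightarrow> real)) \<Rightarrow> bool" where
  "invertible_lp p T \<longleftrightarrow> bounded_linear_lp p T \<and>
     (\<exists>S. bounded_linear_lp p S \<and> (\<forall>x\<in>lp p. S (T x) = x \<and> T (S x) = x))"

definition disjoint_hypercyclic_lp ::
  "real \<Rightarrow> nat \<Rightarrow> (nat \<Rightarrow> (int \<Rightarrow> real) \<Rightarrow> (int \<Rightarrow> real)) \<Rightarrow> bool" where
  "disjoint_hypercyclic_lp p N T \<longleftrightarrow>
     (\<exists>x\<in>lp p. \<forall>y. (\<forall>i\<in>{1..N}. y i \<in> lp p) \<longrightarrow>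
        (\<forall>\<epsilon>>0. \<exists>n::nat. \<forall>i\<in>{1..N}. lp_norm p ((T i ^^ n) x - y i) < \<epsilon>))"

end

theory Submission
  imports Defs "HOL-Library.Countable"
begin


definition Phi :: "real \<Rightarrow> (int \<Rightarrow> real) \<Rightarrow> real" where
  "Phi p x = (\<Sum>\<^sub>\<infinity>j. \<bar>x j\<bar> powr p)"

lemma lp_norm_Phi: "lp_norm p x = Phi p x powr (1/p)"
  by (simp add: lp_norm_def Phi_def)

lemma Phi_nonneg: "Phi p x \<ge> 0"
  unfolding Phi_def by (rule infsum_nonneg) simp

lemma lp_compare:
  assumes "g summable_on UNIV" "\<And>j. \<bar>x j\<bar> powr p \<le> g j"
  shows "x \<in> lp p" "Phi p x \<le> infsum g UNIV"
proof -
  have s: "(\<lambda>j. \<bar>x j\<bar> powr p) summable_on UNIV"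
    by (rule summable_on_comparison_test[OF assms(1)]) (use assms(2) in auto)
  then show "x \<in> lp p" by (simp add: lp_def)
  show "Phi p x \<le> infsum g UNIV" unfolding Phi_def
    by (rule infsum_mono[OF s assms(1)]) (use assms(2) in auto)
qed

lemma shift_summable:
  fixes f :: "int \<Rightarrow> real"
  assumes "f summable_on UNIV"
  shows "(\<lambda>j. f (j + s)) summable_on UNIV" "infsum (\<lambda>j. f (j + s)) UNIV = infsum f UNIV"
proof -
  have b: "bij_betw (\<lambda>j. j + s) UNIV UNIV"
    by (rule bij_betwI[where g="\<lambda>j. j - s"]) auto
  show "(\<lambda>j. f (j + s)) summable_on UNIV" using summable_on_reindex_bij_betw[OF b, of f] assms by simp
  show "infsum (\<lambda>j. f (j + s)) UNIV = infsum f UNIV" using infsum_reindex_bij_betw[OF b, of f] by simp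
qed

lemma lp_shift_bound:
  assumes "z \<in> lp p" "p \<ge> 0" "F \<ge> 0" "\<And>j. \<bar>u j\<bar> \<le> F * \<bar>z (j + s)\<bar>"
  shows "u \<in> lp p" "Phi p u \<le> F powr p * Phi p z"
proof -
  have zs: "(\<lambda>j. \<bar>z j\<bar> powr p) summable_on UNIV" using assms(1) by (simp add: lp_def)
  note sh = shift_summable[OF zs, of s]
  have g: "(\<lambda>j. F powr p * \<bar>z (j + s)\<bar> powr p) summable_on UNIV"
    by (rule summable_on_cmult_right[OF sh(1)])
  have le: "\<bar>u j\<bar> powr p \<le> F powr p * \<bar>z (j + s)\<bar> powr p" for j
  proof -
    have "\<bar>u j\<bar> powr p \<le> (F * \<bar>z (j + s)\<bar>) powr p"
      by (rule powr_mono2) (use assms in auto)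
    also have "\<dots> = F powr p * \<bar>z (j + s)\<bar> powr p" by (simp add: powr_mult)
    finally show ?thesis .
  qed
  note c = lp_compare[OF g le]
  show "u \<in> lp p" by (rule c(1))
  have "infsum (\<lambda>j. F powr p * \<bar>z (j + s)\<bar> powr p) UNIV = F powr p * Phi p z"
    by (subst infsum_cmult_right) (use sh in \<open>auto simp: Phi_def\<close>)
  with c(2) show "Phi p u \<le> F powr p * Phi p z" by simp
qed

lemma lp_finite_support:
  assumes "\<And>j. z j \<noteq> 0 \<Longrightarrow> \<bar>j\<bar> \<le> m"
  shows "z \<in> lp p" "Phi p z = (\<Sum>j\<in>{-m..m}. \<bar>z j\<bar> powr p)"
proof -
  have eq: "infsum (\<lambda>j. \<bar>z j\<bar> powr p) UNIV = infsum (\<lambda>j. \<bar>z j\<bar> powr p) {-m..m}"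
    by (rule infsum_cong_neutral) (use assms in force)+
  have "(\<lambda>j. \<bar>z j\<bar> powr p) summable_on UNIV \<longleftrightarrow> (\<lambda>j. \<bar>z j\<bar> powr p) summable_on {-m..m}"
    by (rule summable_on_cong_neutral) (use assms in force)+
  then show "z \<in> lp p" by (simp add: lp_def)
  show "Phi p z = (\<Sum>j\<in>{-m..m}. \<bar>z j\<bar> powr p)" using eq by (simp add: Phi_def)
qed

lemma lp_quasi_triangle:
  assumes "u \<in> lp p" "v \<in> lp p" "p \<ge> 0"
  shows "(\<lambda>j. u j + v j) \<in> lp p" "Phi p (\<lambda>j. u j + v j) \<le> 2 powr p * (Phi p u + Phi p v)"
proof -
  have us: "(\<lambda>j. \<bar>u j\<bar> powr p) summable_on UNIV" and vs: "(\<lambda>j. \<bar>v j\<bar> powr p) summable_on UNIV"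
    using assms by (auto simp: lp_def)
  have g: "(\<lambda>j. 2 powr p * (\<bar>u j\<bar> powr p + \<bar>v j\<bar> powr p)) summable_on UNIV"
    by (intro summable_on_cmult_right summable_on_add us vs)
  have le: "\<bar>u j + v j\<bar> powr p \<le> 2 powr p * (\<bar>u j\<bar> powr p + \<bar>v j\<bar> powr p)" for j
  proof -
    have "\<bar>u j + v j\<bar> powr p \<le> (2 * max \<bar>u j\<bar> \<bar>v j\<bar>) powr p"
      by (rule powr_mono2) (use assms in auto)
    also have "\<dots> = 2 powr p * max \<bar>u j\<bar> \<bar>v j\<bar> powr p" by (simp add: powr_mult)
    also have "max \<bar>u j\<bar> \<bar>v j\<bar> powr p \<le> \<bar>u j\<bar> powr p + \<bar>v j\<bar> powr p"
      by (cases "\<bar>u j\<bar> \<le> \<bar>v j\<bar>") (auto simp: max_def)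
    finally show ?thesis by simp
  qed
  note c = lp_compare[OF g le]
  show "(\<lambda>j. u j + v j) \<in> lp p" by (rule c(1))
  have "infsum (\<lambda>j. 2 powr p * (\<bar>u j\<bar> powr p + \<bar>v j\<bar> powr p)) UNIV = 2 powr p * (Phi p u + Phi p v)"
    by (subst infsum_cmult_right) (use us vs in \<open>auto simp: Phi_def infsum_add summable_on_add\<close>)
  with c(2) show "Phi p (\<lambda>j. u j + v j) \<le> 2 powr p * (Phi p u + Phi p v)" by simp
qed

lemma lp_disjoint_sum:
  assumes vl: "\<And>a. a \<in> B \<Longrightarrow> v a \<in> lp p"
    and S: "\<And>A. finite A \<Longrightarrow> A \<subseteq> B \<Longrightarrow> (\<Sum>a\<in>A. Phi p (v a)) \<le> S"
    and u: "\<And>j. u j \<noteq> 0 \<Longrightarrow> \<exists>a\<in>B. u j = v a j"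
  shows "u \<in> lp p" "Phi p u \<le> S"
proof -
  have fin: "sum (\<lambda>j. \<bar>u j\<bar> powr p) J \<le> S" if J: "finite J" for J
  proof -
    define J' where "J' = {j\<in>J. u j \<noteq> 0}"
    define c where "c j = (SOME a. a \<in> B \<and> u j = v a j)" for j
    have c: "c j \<in> B \<and> u j = v (c j) j" if "j \<in> J'" for j
      unfolding c_def by (rule someI_ex) (use u that J'_def in auto)
    define A where "A = c ` J'"
    have fJ': "finite J'" using J by (simp add: J'_def)
    have fA: "finite A" using fJ' by (simp add: A_def)
    have AB: "A \<subseteq> B" using c by (auto simp: A_def)
    have "sum (\<lambda>j. \<bar>u j\<bar> powr p) J = sum (\<lambda>j. \<bar>u j\<bar> powr p) J'"
      by (rule sum.mono_neutral_right) (auto simp: J'_def J)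
    also have "\<dots> \<le> (\<Sum>j\<in>J'. \<Sum>a\<in>A. \<bar>v a j\<bar> powr p)"
    proof (rule sum_mono)
      fix j assume j: "j \<in> J'"
      have "\<bar>u j\<bar> powr p = \<bar>v (c j) j\<bar> powr p" using c[OF j] by simp
      also have "\<dots> \<le> (\<Sum>a\<in>A. \<bar>v a j\<bar> powr p)"
        by (rule member_le_sum) (use j fA in \<open>auto simp: A_def\<close>)
      finally show "\<bar>u j\<bar> powr p \<le> (\<Sum>a\<in>A. \<bar>v a j\<bar> powr p)" .
    qed
    also have "\<dots> = (\<Sum>a\<in>A. \<Sum>j\<in>J'. \<bar>v a j\<bar> powr p)" by (rule sum.swap)
    also have "\<dots> \<le> (\<Sum>a\<in>A. Phi p (v a))"
    proof (rule sum_mono)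
      fix a assume "a \<in> A"
      then have "v a \<in> lp p" using AB vl by auto
      then show "(\<Sum>j\<in>J'. \<bar>v a j\<bar> powr p) \<le> Phi p (v a)"
        unfolding Phi_def by (intro finite_sum_le_infsum) (auto simp: lp_def fJ')
    qed
    also have "\<dots> \<le> S" by (rule S[OF fA AB])
    finally show ?thesis .
  qed
  have s: "(\<lambda>j. \<bar>u j\<bar> powr p) summable_on UNIV"
    by (rule nonneg_bdd_above_summable_on) (use fin in \<open>auto intro!: bdd_aboveI[where M=S]\<close>)
  then show "u \<in> lp p" by (simp add: lp_def)
  show "Phi p u \<le> S" unfolding Phi_def
    by (rule infsum_le_finite_sums[OF s]) (use fin in auto)
qed



definition Wt :: "int \<Rightarrow> real \<Rightarrow> int \<Rightarrow> real" where
  "Wt l lam j = (if j > l then lam else 1 / lam)"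

definition Ef :: "nat \<Rightarrow> int \<Rightarrow> int \<Rightarrow> int" where
  "Ef d l j = \<bar>(j - l - 1 + int d) div int d\<bar>"

definition Sh :: "nat \<Rightarrow> int \<Rightarrow> real \<Rightarrow> (int \<Rightarrow> real) \<Rightarrow> (int \<Rightarrow> real)" where
  "Sh d l lam x = (\<lambda>j. Wt l lam (j + int d) * x (j + int d))"

lemma Wt_Ef:
  assumes "d > 0" "lam \<noteq> 0"
  shows "Wt l lam (j + int d) = lam powi (Ef d l (j + int d) - Ef d l j)"
proof -
  define a where "a = (j - l - 1 + int d) div int d"
  have a1: "(j + int d - l - 1 + int d) div int d = a + 1"
  proof -
    have "j + int d - l - 1 + int d = (j - l - 1 + int d) + int d" by simp
    then show ?thesis unfolding a_def using assms by (simp only: div_add_self2)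
  qed
  have "a \<ge> 0 \<longleftrightarrow> j - l - 1 + int d \<ge> 0"
    unfolding a_def by (rule pos_imp_zdiv_nonneg_iff) (use assms in simp)
  then show ?thesis using a1 assms
    by (auto simp: Wt_def Ef_def a_def[symmetric] power_int_minus divide_inverse)
qed

lemma Ef_bounds:
  assumes "d > 0"
  shows "int d * Ef d l j \<le> \<bar>j\<bar> + (\<bar>l\<bar> + int d)" "\<bar>j\<bar> \<le> int d * Ef d l j + (\<bar>l\<bar> + int d)"
proof -
  define a where "a = (j - l - 1 + int d) div int d"
  define r where "r = (j - l - 1 + int d) mod int d"
  have e: "int d * a + r = j - l - 1 + int d" unfolding a_def r_def by (rule mult_div_mod_eq)
  have r: "0 \<le> r" "r < int d" unfolding r_def using assms by auto
  have "\<bar>int d * a - j\<bar> \<le> \<bar>l\<bar> + int d" using e r by linarith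
  moreover have "int d * Ef d l j = \<bar>int d * a\<bar>" unfolding Ef_def a_def[symmetric] by (simp add: abs_mult)
  ultimately show "int d * Ef d l j \<le> \<bar>j\<bar> + (\<bar>l\<bar> + int d)" "\<bar>j\<bar> \<le> int d * Ef d l j + (\<bar>l\<bar> + int d)"
    by linarith+
qed

lemma Ef_step:
  assumes "d > 0"
  shows "\<bar>Ef d l (j + int d) - Ef d l j\<bar> = 1"
proof -
  define a where "a = (j - l - 1 + int d) div int d"
  have a1: "(j + int d - l - 1 + int d) div int d = a + 1"
  proof -
    have "j + int d - l - 1 + int d = (j - l - 1 + int d) + int d" by simp
    then show ?thesis unfolding a_def using assms by (simp only: div_add_self2)
  qed
  show ?thesis unfolding Ef_def a_def[symmetric] using a1 by (simp add: algebra_simps)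
qed

lemma Ef_step_n:
  assumes "d > 0"
  shows "\<bar>Ef d l (j + int n * int d) - Ef d l j\<bar> \<le> int n"
proof (induction n)
  case 0 then show ?case by simp
next
  case (Suc n)
  have "\<bar>Ef d l (j + int n * int d + int d) - Ef d l (j + int n * int d)\<bar> = 1"
    by (rule Ef_step[OF assms])
  moreover have "Ef d l (j + int (Suc n) * int d) = Ef d l (j + int n * int d + int d)" by (simp add: algebra_simps)
  ultimately show ?case using Suc by simp
qed

lemma Sh_pow:
  assumes "d > 0" "lam \<noteq> 0"
  shows "(Sh d l lam ^^ n) x j = lam powi (Ef d l (j + int n * int d) - Ef d l j) * x (j + int n * int d)"
proof (induction n arbitrary: j)
  case 0 then show ?case by simp
next
  case (Suc n)
  have "(Sh d l lam ^^ Suc n) x j = Wt l lam (j + int d) * (Sh d l lam ^^ n) x (j + int d)"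
    by (simp add: Sh_def)
  also have "\<dots> = lam powi (Ef d l (j + int d) - Ef d l j) *
     (lam powi (Ef d l (j + int d + int n * int d) - Ef d l (j + int d)) * x (j + int d + int n * int d))"
    by (simp add: Wt_Ef[OF assms] Suc)
  also have "\<dots> = lam powi (Ef d l (j + int (Suc n) * int d) - Ef d l j) * x (j + int (Suc n) * int d)"
    using assms(2) by (simp add: algebra_simps power_int_add[symmetric])
  finally show ?case .
qed

lemma abs_powi: "lam \<noteq> 0 \<Longrightarrow> \<bar>lam powi k\<bar> = \<bar>lam\<bar> powr (real_of_int k)"
  by (simp add: power_int_abs powr_real_of_int')

lemma int_div_trick:
  fixes D n X :: int and d :: nat
  assumes "int d * (D + n) \<le> X" "X \<ge> 0" "d > 0"
  shows "D + n \<le> X"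
proof (cases "D + n \<le> 0")
  case True then show ?thesis using assms by linarith
next
  case False
  then have "1 * (D + n) \<le> int d * (D + n)" using assms(3) by (intro mult_right_mono) auto
  then have "D + n \<le> int d * (D + n)" by simp
  then show ?thesis using assms by linarith
qed

lemma Ef_diff1:
  assumes "d > 0" "\<bar>r\<bar> \<le> int m"
  shows "Ef d l r - Ef d l (r + int n * int d) \<le> 2 * (int m + (\<bar>l\<bar> + int d)) - int n"
proof -
  define X where "X = int n * int d"
  have X0: "X \<ge> 0" unfolding X_def by simp
  note b1 = Ef_bounds[OF assms(1), where l=l and j=r] and b2 = Ef_bounds[OF assms(1), where l=l and j="r + X"]
  have "\<bar>r + X\<bar> \<ge> X - int m" using assms X0 by linarith
  then have "int d * Ef d l r - int d * Ef d l (r + X) + X \<le> 2 * int m + 2 * \<bar>l\<bar> + 2 * int d"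
    using b1 b2 assms by linarith
  then have "int d * ((Ef d l r - Ef d l (r + X)) + int n) \<le> 2 * (int m + (\<bar>l\<bar> + int d))"
    by (simp add: X_def algebra_simps)
  from int_div_trick[OF this] assms show ?thesis by (simp add: X_def)
qed

lemma Ef_diff2:
  assumes "d > 0" "0 \<le> b" "b \<le> P"
  shows "Ef d l b - Ef d l (b - int n * int d) \<le> 2 * P + 2 * (\<bar>l\<bar> + int d) - int n"
proof -
  define X where "X = int n * int d"
  note b1 = Ef_bounds[OF assms(1), where l=l and j=b] and b2 = Ef_bounds[OF assms(1), where l=l and j="b - X"]
  have "\<bar>b - X\<bar> \<ge> X - b" by linarith
  then have "int d * Ef d l b - int d * Ef d l (b - X) + X \<le> 2 * P + 2 * \<bar>l\<bar> + 2 * int d"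
    using b1 b2 assms by linarith
  then have "int d * ((Ef d l b - Ef d l (b - X)) + int n) \<le> 2 * P + 2 * (\<bar>l\<bar> + int d)"
    by (simp add: X_def algebra_simps)
  from int_div_trick[OF this] assms show ?thesis by (simp add: X_def)
qed

lemma Ef_diff3:
  assumes "d > 0" "\<bar>r\<bar> \<le> int m" "2 * d' < d" "2 * int m + 2 * (\<bar>l\<bar> + int d) \<le> int n"
  shows "Ef d l (r + int n * int d') - Ef d l (r + int n * int d' - int n * int d) \<le> 0"
proof -
  define X where "X = int n * int d'"
  define Y where "Y = int n * int d"
  note b1 = Ef_bounds[OF assms(1), where l=l and j="r + X"]
    and b2 = Ef_bounds[OF assms(1), where l=l and j="r + X - Y"]
  have X0: "X \<ge> 0" unfolding X_def by simp
  have h3: "2 * X + int n \<le> Y"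
  proof -
    have "2 * int d' + 1 \<le> int d" using assms(3) by linarith
    then have "int n * (2 * int d' + 1) \<le> int n * int d" by (intro mult_left_mono) auto
    then show ?thesis by (simp add: X_def Y_def algebra_simps)
  qed
  have h1: "\<bar>r + X\<bar> \<le> int m + X" using assms X0 by linarith
  have h2: "\<bar>r + X - Y\<bar> \<ge> Y - X - int m" using assms by linarith
  have "int d * Ef d l (r + X) - int d * Ef d l (r + X - Y) \<le> 0"
    using b1 b2 h1 h2 h3 assms(4) by (simp add: algebra_simps)
  then have "int d * (Ef d l (r + X) - Ef d l (r + X - Y)) \<le> 0" by (simp add: algebra_simps)
  then show ?thesis using assms(1) by (simp add: mult_le_0_iff X_def Y_def)
qed



lemma ev_small:
  fixes f :: "nat \<Rightarrow> real"
  assumes "(f \<longlongrightarrow> 0) sequentially" "\<And>n. f n \<ge> 0" "\<epsilon> > 0" "p > 0"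
  shows "eventually (\<lambda>n. f n powr p * C \<le> \<epsilon>) sequentially"
proof -
  have "((\<lambda>n. f n powr p) \<longlongrightarrow> 0) sequentially"
    by (rule tendsto_zero_powrI[OF assms(1) tendsto_const]) (use assms in auto)
  then have "((\<lambda>n. f n powr p * C) \<longlongrightarrow> 0 * C) sequentially"
    by (intro tendsto_mult tendsto_const)
  then have "eventually (\<lambda>n. f n powr p * C < \<epsilon>) sequentially"
    using order_tendstoD(2)[of _ 0 sequentially \<epsilon>] assms(3) by simp
  then show ?thesis by eventually_elim simp
qed

lemma lim_powr1:
  fixes a c :: real
  assumes "a > 1"
  shows "((\<lambda>n. a powr (c - real n)) \<longlongrightarrow> 0) sequentially"
proof -
  have eq: "a powr (c - real n) = a powr c * (inverse a) ^ n" for n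
    using assms by (simp add: powr_diff powr_realpow divide_inverse power_inverse)
  have "((\<lambda>n. a powr c * (inverse a) ^ n) \<longlongrightarrow> a powr c * 0) sequentially"
    by (intro tendsto_mult tendsto_const LIMSEQ_realpow_zero) (use assms in \<open>auto simp: field_simps\<close>)
  then show ?thesis by (simp add: eq)
qed

lemma lim_powr2:
  fixes a b c :: real
  assumes "0 < b" "b < a"
  shows "((\<lambda>n. b powr real n * a powr (c - real n)) \<longlongrightarrow> 0) sequentially"
proof -
  have eq: "b powr real n * a powr (c - real n) = a powr c * (b / a) ^ n" for n
    using assms by (simp add: powr_diff powr_realpow power_divide)
  have "((\<lambda>n. a powr c * (b / a) ^ n) \<longlongrightarrow> a powr c * 0) sequentially"
    by (intro tendsto_mult tendsto_const LIMSEQ_realpow_zero) (use assms in auto)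
  then show ?thesis by (simp add: eq)
qed

lemma sum_blocks:
  fixes f :: "nat \<times> nat \<Rightarrow> real"
  assumes "finite A" "\<And>a. a \<in> A \<Longrightarrow> 0 \<le> f a" "\<And>a. a \<in> A \<Longrightarrow> snd a \<notin> {1..N} \<Longrightarrow> f a = 0"
    "\<And>a. a \<in> A \<Longrightarrow> f a \<le> g (fst a)"
  shows "(\<Sum>a\<in>A. f a) \<le> (\<Sum>k\<in>fst ` A. real N * g k)"
proof -
  have "(\<Sum>a\<in>A. f a) = (\<Sum>k\<in>fst ` A. \<Sum>a\<in>{a\<in>A. fst a = k}. f a)"
    by (rule sum.group[symmetric]) (use assms in auto)
  also have "\<dots> \<le> (\<Sum>k\<in>fst ` A. real N * g k)"
  proof (rule sum_mono)
    fix k assume k: "k \<in> fst ` A"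
    then obtain a0 where a0: "a0 \<in> A" "fst a0 = k" by auto
    have gk: "g k \<ge> 0" using assms(2,4)[OF a0(1)] a0 by auto
    define A' where "A' = {a\<in>A. fst a = k \<and> snd a \<in> {1..N}}"
    have e1: "(\<Sum>a\<in>{a\<in>A. fst a = k}. f a) = (\<Sum>a\<in>A'. f a)"
      by (rule sum.mono_neutral_right) (use assms in \<open>auto simp: A'_def\<close>)
    have e2: "(\<Sum>a\<in>A'. f a) \<le> of_nat (card A') * g k"
      by (rule sum_bounded_above) (use assms in \<open>auto simp: A'_def\<close>)
    have c: "card A' \<le> N"
    proof -
      have "A' \<subseteq> {k} \<times> {1..N}" by (auto simp: A'_def)
      then have "card A' \<le> card ({k} \<times> {1..N})" by (intro card_mono) auto
      then show ?thesis by (simp add: card_cartesian_product)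
    qed
    have "of_nat (card A') * g k \<le> real N * g k"
      using c gk by (intro mult_right_mono) auto
    then show "(\<Sum>a\<in>{a\<in>A. fst a = k}. f a) \<le> real N * g k" using e1 e2 by linarith
  qed
  finally show ?thesis .
qed

lemma geom_half: "finite F \<Longrightarrow> (\<Sum>k\<in>F. (1/2::real) ^ k) \<le> 2"
proof -
  assume "finite F"
  then have "(\<Sum>k\<in>F. (1/2::real) ^ k) \<le> (\<Sum>k. (1/2::real) ^ k)"
    by (intro sum_le_suminf summable_geometric) auto
  also have "\<dots> = 2" by (subst suminf_geometric) auto
  finally show ?thesis .
qed

lemma geom_quarter_tail:
  assumes "finite F" "\<And>k. k \<in> F \<Longrightarrow> K < k"
  shows "(\<Sum>k\<in>F. (1/4::real) ^ k) \<le> (1/2) ^ K"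
proof -
  have "(\<Sum>k\<in>F. (1/4::real) ^ k) \<le> (\<Sum>k\<in>F. (1/2) ^ (Suc K) * (1/2::real) ^ k)"
  proof (rule sum_mono)
    fix k assume "k \<in> F"
    then have "Suc K \<le> k" using assms(2)[of k] by simp
    then have "(1/2::real) ^ k \<le> (1/2) ^ Suc K" by (intro power_decreasing) auto
    then have "(1/2::real) ^ k * (1/2) ^ k \<le> (1/2) ^ Suc K * (1/2) ^ k"
      by (intro mult_right_mono) auto
    moreover have "(1/4::real) ^ k = (1/2) ^ k * (1/2) ^ k"
      by (simp add: power_mult_distrib[symmetric])
    ultimately show "(1/4::real) ^ k \<le> (1/2) ^ Suc K * (1/2) ^ k" by simp
  qed
  also have "\<dots> = (1/2) ^ Suc K * (\<Sum>k\<in>F. (1/2::real) ^ k)" by (simp add: sum_distrib_left)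
  also have "\<dots> \<le> (1/2) ^ Suc K * 2" by (intro mult_left_mono geom_half assms) auto
  also have "\<dots> = (1/2) ^ K" by simp
  finally show ?thesis .
qed

lemma geom_quarter: "finite F \<Longrightarrow> (\<Sum>k\<in>F. (1/4::real) ^ k) \<le> 2"
proof -
  assume f: "finite F"
  have "(\<Sum>k\<in>F. (1/4::real) ^ k) \<le> (\<Sum>k\<in>F. (1/2::real) ^ k)"
    by (intro sum_mono power_mono) auto
  also have "\<dots> \<le> 2" by (rule geom_half[OF f])
  finally show ?thesis .
qed



locale hc_setup =
  fixes p :: real and N :: nat and d :: "nat \<Rightarrow> nat" and l :: "nat \<Rightarrow> int" and lam :: "nat \<Rightarrow> real"
    and z :: "nat \<Rightarrow> nat \<Rightarrow> int \<Rightarrow> real" and m :: "nat \<Rightarrow> nat"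
  assumes p1: "1 \<le> p" and N1: "1 \<le> N"
    and dpos: "\<And>i. i \<in> {1..N} \<Longrightarrow> d i > 0"
    and dgrow: "\<And>s t. s \<in> {1..N} \<Longrightarrow> t \<in> {1..N} \<Longrightarrow> s < t \<Longrightarrow> 2 * d s < d t"
    and lgrow: "\<And>s t. s \<in> {1..N} \<Longrightarrow> t \<in> {1..N} \<Longrightarrow> s < t \<Longrightarrow> \<bar>lam s\<bar> < \<bar>lam t\<bar>"
    and lam1: "\<And>i. i \<in> {1..N} \<Longrightarrow> 1 < \<bar>lam i\<bar>"
    and zsupp: "\<And>k i j. z k i j \<noteq> 0 \<Longrightarrow> \<bar>j\<bar> \<le> int (m k)"
begin

abbreviation T where "T i \<equiv> Sh (d i) (l i) (lam i)"
abbreviation E where "E i \<equiv> Ef (d i) (l i)"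
definition Bc :: "nat \<Rightarrow> int" where "Bc i = \<bar>l i\<bar> + int (d i)"
definition L :: "nat \<Rightarrow> real" where "L i = \<bar>lam i\<bar>"
definition Phz :: "nat \<Rightarrow> nat \<Rightarrow> real" where "Phz K i = Phi p (z K i)"
definition Mb :: "nat \<Rightarrow> nat" where "Mb K = (\<Sum>k<K. m k)"
definition PP :: "nat \<Rightarrow> nat \<Rightarrow> int" where "PP K prev = int prev * int (d N) + int (Mb K)"

definition Good :: "nat \<Rightarrow> nat \<Rightarrow> nat \<Rightarrow> bool" where
  "Good K prev n \<longleftrightarrow>
     prev < n \<and>
     PP K prev + int (m K) < int n * int (d 1) \<and>
     2 * m K < n \<and>
     (\<forall>i\<in>{1..N}. 2 * int (m K) + 2 * Bc i \<le> int n) \<and>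
     (\<forall>i\<in>{1..N}. \<forall>i'\<in>{1..N}.
        (L i' powr (real_of_int (2 * (int (m K) + Bc i')) - real n)) powr p * (Phz K i' * (L i powr real prev) powr p)
          \<le> (1/4)^K / N) \<and>
     (\<forall>i\<in>{1..N}. \<forall>i'\<in>{1..N}. i < i' \<longrightarrow>
        (L i powr real n * L i' powr (real_of_int (2 * (int (m K) + Bc i')) - real n)) powr p * Phz K i'
          \<le> (1/2)^K / N) \<and>
     (\<forall>i\<in>{1..N}. \<forall>i'\<in>{1..N}. i' < i \<longrightarrow>
        (L i' powr (real_of_int (2 * (int (m K) + Bc i')) - real n)) powr p * Phz K i'
          \<le> (1/2)^K / N) \<and>
     (\<forall>i\<in>{1..N}. (L i powr (real_of_int (2 * PP K prev + 2 * Bc i) - real n)) powr p * 2 \<le> (1/2)^K)"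

lemma p0: "p > 0" using p1 by simp

lemma L1: "i \<in> {1..N} \<Longrightarrow> L i > 1" using lam1 by (simp add: L_def)

lemma lam0: "i \<in> {1..N} \<Longrightarrow> lam i \<noteq> 0" using lam1 by force

lemma d1_le: "i \<in> {1..N} \<Longrightarrow> d 1 \<le> d i"
  using dgrow[of 1 i] N1 by (cases "i = 1") auto

lemma dN_ge: "i \<in> {1..N} \<Longrightarrow> d i \<le> d N"
  using dgrow[of i N] N1 by (cases "i = N") auto

lemma ev_Good: "eventually (\<lambda>n. Good K prev n) sequentially"
proof -
  have fin: "finite {1..N}" by simp
  have eps1: "(1/4::real)^K / N > 0" and eps2: "(1/2::real)^K / N > 0" and eps3: "(1/2::real)^K > 0"
    using N1 by auto
  have e1: "eventually (\<lambda>n. prev < n) sequentially" by (rule eventually_gt_at_top)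
  have e2: "eventually (\<lambda>n. PP K prev + int (m K) < int n * int (d 1)) sequentially"
  proof -
    have "eventually (\<lambda>n. nat (PP K prev + int (m K)) < n) sequentially" by (rule eventually_gt_at_top)
    then show ?thesis
    proof eventually_elim
      case (elim n)
      have "1 \<le> int (d 1)" using dpos[of 1] N1 by simp
      then have "int n * 1 \<le> int n * int (d 1)" by (intro mult_left_mono) auto
      then show ?case using elim by linarith
    qed
  qed
  have e3: "eventually (\<lambda>n. 2 * m K < n) sequentially" by (rule eventually_gt_at_top)
  have e4: "eventually (\<lambda>n. \<forall>i\<in>{1..N}. 2 * int (m K) + 2 * Bc i \<le> int n) sequentially"
  proof (rule eventually_ball_finite[OF fin], rule ballI)
    fix i
    have "eventually (\<lambda>n. nat (2 * int (m K) + 2 * Bc i) \<le> n) sequentially" by (rule eventually_ge_at_top)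
    then show "eventually (\<lambda>n. 2 * int (m K) + 2 * Bc i \<le> int n) sequentially"
      by eventually_elim linarith
  qed
  have e5: "eventually (\<lambda>n. \<forall>i\<in>{1..N}. \<forall>i'\<in>{1..N}.
        (L i' powr (real_of_int (2 * (int (m K) + Bc i')) - real n)) powr p * (Phz K i' * (L i powr real prev) powr p)
          \<le> (1/4)^K / N) sequentially"
  proof (rule eventually_ball_finite[OF fin], rule ballI, rule eventually_ball_finite[OF fin], rule ballI)
    fix i i' assume "i' \<in> {1..N}"
    then show "eventually (\<lambda>n. (L i' powr (real_of_int (2 * (int (m K) + Bc i')) - real n)) powr p * (Phz K i' * (L i powr real prev) powr p)
          \<le> (1/4)^K / N) sequentially"
      by (intro ev_small lim_powr1 L1 eps1 p0) auto
  qed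
  have e6: "eventually (\<lambda>n. \<forall>i\<in>{1..N}. \<forall>i'\<in>{1..N}. i < i' \<longrightarrow>
        (L i powr real n * L i' powr (real_of_int (2 * (int (m K) + Bc i')) - real n)) powr p * Phz K i'
          \<le> (1/2)^K / N) sequentially"
  proof (rule eventually_ball_finite[OF fin], rule ballI, rule eventually_ball_finite[OF fin], rule ballI)
    fix i i' assume i: "i \<in> {1..N}" and i': "i' \<in> {1..N}"
    show "eventually (\<lambda>n. i < i' \<longrightarrow> (L i powr real n * L i' powr (real_of_int (2 * (int (m K) + Bc i')) - real n)) powr p * Phz K i'
          \<le> (1/2)^K / N) sequentially"
    proof (cases "i < i'")
      case True
      have "0 < L i" "L i < L i'" using L1[OF i] lgrow[OF i i' True] by (auto simp: L_def)
      then have "eventually (\<lambda>n. (L i powr real n * L i' powr (real_of_int (2 * (int (m K) + Bc i')) - real n)) powr p * Phz K i'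
          \<le> (1/2)^K / N) sequentially"
        by (intro ev_small lim_powr2 eps2 p0) auto
      then show ?thesis by eventually_elim simp
    qed simp
  qed
  have e7: "eventually (\<lambda>n. \<forall>i\<in>{1..N}. \<forall>i'\<in>{1..N}. i' < i \<longrightarrow>
        (L i' powr (real_of_int (2 * (int (m K) + Bc i')) - real n)) powr p * Phz K i'
          \<le> (1/2)^K / N) sequentially"
  proof (rule eventually_ball_finite[OF fin], rule ballI, rule eventually_ball_finite[OF fin], rule ballI)
    fix i i' assume i': "i' \<in> {1..N}"
    have "eventually (\<lambda>n. (L i' powr (real_of_int (2 * (int (m K) + Bc i')) - real n)) powr p * Phz K i'
          \<le> (1/2)^K / N) sequentially"
      by (intro ev_small lim_powr1 L1 i' eps2 p0) auto
    then show "eventually (\<lambda>n. i' < i \<longrightarrow> (L i' powr (real_of_int (2 * (int (m K) + Bc i')) - real n)) powr p * Phz K i'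
          \<le> (1/2)^K / N) sequentially"
      by eventually_elim simp
  qed
  have e8: "eventually (\<lambda>n. \<forall>i\<in>{1..N}. (L i powr (real_of_int (2 * PP K prev + 2 * Bc i) - real n)) powr p * 2 \<le> (1/2)^K) sequentially"
  proof (rule eventually_ball_finite[OF fin], rule ballI)
    fix i assume i: "i \<in> {1..N}"
    show "eventually (\<lambda>n. (L i powr (real_of_int (2 * PP K prev + 2 * Bc i) - real n)) powr p * 2 \<le> (1/2)^K) sequentially"
      by (intro ev_small lim_powr1 L1 i eps3 p0) auto
  qed
  show ?thesis unfolding Good_def
    using e1 e2 e3 e4 e5 e6 e7 e8 by (auto elim: eventually_elim2 intro!: eventually_conj)
qed

definition pick :: "nat \<Rightarrow> nat \<Rightarrow> nat" where "pick K prev = (SOME n. Good K prev n)"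

lemma Good_pick: "Good K prev (pick K prev)"
proof -
  obtain n where "Good K prev n" using ev_Good[of K prev] eventually_sequentially by auto
  then show ?thesis unfolding pick_def by (rule someI)
qed

fun nn :: "nat \<Rightarrow> nat" where
  "nn 0 = pick 0 0"
| "nn (Suc k) = pick (Suc k) (nn k)"

definition prevn :: "nat \<Rightarrow> nat" where "prevn K = (case K of 0 \<Rightarrow> 0 | Suc k \<Rightarrow> nn k)"

lemma Good_nn: "Good K (prevn K) (nn K)"
  by (cases K) (simp_all add: prevn_def Good_pick)

lemma nn_mono_step: "nn k < nn (Suc k)"
  using Good_nn[of "Suc k"] by (simp add: Good_def prevn_def)

lemma nn_mono: "k \<le> k' \<Longrightarrow> nn k \<le> nn k'"
  by (rule lift_Suc_mono_le[of nn]) (use nn_mono_step less_imp_le in blast)+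

lemma prevn_ge: "k < K \<Longrightarrow> nn k \<le> prevn K"
  by (cases K) (auto simp: prevn_def intro: nn_mono)

definition Pend :: "nat \<Rightarrow> int" where "Pend k = int (nn k) * int (d N) + int (m k)"

lemma Pend_le: "k < K \<Longrightarrow> Pend k \<le> PP K (prevn K)"
proof (induction K)
  case 0 then show ?case by simp
next
  case (Suc K)
  have d1N: "int (nn K) * int (d 1) \<le> int (nn K) * int (d N)"
    using dN_ge[of 1] N1 by (intro mult_left_mono) auto
  have G: "PP K (prevn K) + int (m K) < int (nn K) * int (d 1)"
    using Good_nn[of K] by (simp add: Good_def)
  have PPS: "PP (Suc K) (prevn (Suc K)) = int (nn K) * int (d N) + int (Mb K) + int (m K)"
    by (simp add: PP_def prevn_def Mb_def)
  show ?case
  proof (cases "k = K")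
    case True then show ?thesis using PPS by (simp add: Pend_def)
  next
    case False
    then have "Pend k \<le> PP K (prevn K)" using Suc by simp
    then show ?thesis using PPS G d1N by (simp add: Pend_def)
  qed
qed

lemma PP_nonneg: "0 \<le> PP K prev" by (simp add: PP_def)

definition v :: "nat \<Rightarrow> nat \<Rightarrow> int \<Rightarrow> real" where
  "v k i b = (if i \<in> {1..N} then lam i powi (E i (b - int (nn k) * int (d i)) - E i b)
                 * z k i (b - int (nn k) * int (d i)) else 0)"

lemma v_supp:
  assumes "v k i b \<noteq> 0"
  shows "i \<in> {1..N}" "\<bar>b - int (nn k) * int (d i)\<bar> \<le> int (m k)"
  using assms zsupp by (auto simp: v_def split: if_splits)

lemma v_range:
  assumes "v k i b \<noteq> 0"
  shows "PP k (prevn k) < b" "b \<le> Pend k"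
proof -
  note s = v_supp[OF assms]
  have G: "PP k (prevn k) + int (m k) < int (nn k) * int (d 1)"
    using Good_nn[of k] by (simp add: Good_def)
  have "int (nn k) * int (d 1) \<le> int (nn k) * int (d i)"
    using d1_le[OF s(1)] by (intro mult_left_mono) auto
  then show "PP k (prevn k) < b" using G s(2) by linarith
  have "int (nn k) * int (d i) \<le> int (nn k) * int (d N)"
    using dN_ge[OF s(1)] by (intro mult_left_mono) auto
  then show "b \<le> Pend k" using s(2) by (simp add: Pend_def)
qed

lemma v_disj:
  assumes "v k i b \<noteq> 0" "v k' i' b \<noteq> 0"
  shows "k = k' \<and> i = i'"
proof -
  have kk: "k = k'"
  proof (rule ccontr)
    assume "k \<noteq> k'"
    then consider "k < k'" | "k' < k" by linarith
    then show False
    proof cases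
      case 1
      then show False using v_range[OF assms(1)] v_range[OF assms(2)] Pend_le[OF 1] by linarith
    next
      case 2
      then show False using v_range[OF assms(1)] v_range[OF assms(2)] Pend_le[OF 2] by linarith
    qed
  qed
  have ii: "i = i'"
  proof (rule ccontr)
    assume ne: "i \<noteq> i'"
    have G: "2 * m k < nn k" using Good_nn[of k] by (simp add: Good_def)
    have key: False if "v k a b \<noteq> 0" "v k c b \<noteq> 0" "a < c" for a c
    proof -
      note sa = v_supp[OF that(1)] and sc = v_supp[OF that(2)]
      have "2 * d a < d c" using dgrow[OF sa(1) sc(1) that(3)] .
      then have "int (d a) + 1 \<le> int (d c)" by linarith
      then have "int (nn k) * (int (d a) + 1) \<le> int (nn k) * int (d c)" by (intro mult_left_mono) auto
      then show False using sa(2) sc(2) G by (simp add: algebra_simps)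
    qed
    from ne consider "i < i'" | "i' < i" by linarith
    then show False using key assms kk by metis
  qed
  show ?thesis using kk ii by simp
qed

end



context hc_setup
begin

lemma z_lp: "z K i \<in> lp p"
  by (rule lp_finite_support(1)[where m="int (m K)"]) (use zsupp in auto)

lemma T_pow:
  assumes "i \<in> {1..N}"
  shows "(T i ^^ n) u j = lam i powi (E i (j + int n * int (d i)) - E i j) * u (j + int n * int (d i))"
  by (rule Sh_pow) (use dpos[OF assms] lam0[OF assms] in auto)

lemma abs_lam_powi: "i \<in> {1..N} \<Longrightarrow> \<bar>lam i powi k\<bar> = L i powr real_of_int k"
  using abs_powi[OF lam0] by (simp add: L_def)

lemma L_powr_mono: "i \<in> {1..N} \<Longrightarrow> x \<le> y \<Longrightarrow> L i powr x \<le> L i powr y"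
  by (drule L1) (intro powr_mono, auto)

lemma T_pw:
  assumes i: "i \<in> {1..N}"
  shows "\<bar>(T i ^^ n) u j\<bar> \<le> L i powr real n * \<bar>u (j + int n * int (d i))\<bar>"
proof -
  have "\<bar>(T i ^^ n) u j\<bar> = L i powr real_of_int (E i (j + int n * int (d i)) - E i j) * \<bar>u (j + int n * int (d i))\<bar>"
    by (simp add: T_pow[OF i] abs_mult abs_lam_powi[OF i])
  also have "\<dots> \<le> L i powr real n * \<bar>u (j + int n * int (d i))\<bar>"
  proof (rule mult_right_mono)
    have "E i (j + int n * int (d i)) - E i j \<le> int n"
      using Ef_step_n[OF dpos[OF i], of "l i" j n] by linarith
    then show "L i powr real_of_int (E i (j + int n * int (d i)) - E i j) \<le> L i powr real n"
      by (intro L_powr_mono[OF i]) linarith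
  qed simp
  finally show ?thesis .
qed

lemma T_bound:
  assumes i: "i \<in> {1..N}" and u: "u \<in> lp p"
  shows "(T i ^^ n) u \<in> lp p" "Phi p ((T i ^^ n) u) \<le> (L i powr real n) powr p * Phi p u"
proof -
  have pw: "\<bar>(T i ^^ n) u j\<bar> \<le> L i powr real n * \<bar>u (j + int n * int (d i))\<bar>" for j
  proof -
    have "\<bar>(T i ^^ n) u j\<bar> = L i powr real_of_int (E i (j + int n * int (d i)) - E i j) * \<bar>u (j + int n * int (d i))\<bar>"
      by (simp add: T_pow[OF i] abs_mult abs_lam_powi[OF i])
    also have "\<dots> \<le> L i powr real n * \<bar>u (j + int n * int (d i))\<bar>"
    proof (rule mult_right_mono)
      have "E i (j + int n * int (d i)) - E i j \<le> int n"
        using Ef_step_n[OF dpos[OF i], of "l i" j n] by linarith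
      then show "L i powr real_of_int (E i (j + int n * int (d i)) - E i j) \<le> L i powr real n"
        by (intro L_powr_mono[OF i]) linarith
    qed simp
    finally show ?thesis .
  qed
  note r = lp_shift_bound[OF u _ _ pw]
  show "(T i ^^ n) u \<in> lp p" "Phi p ((T i ^^ n) u) \<le> (L i powr real n) powr p * Phi p u"
    using r p1 by auto
qed

definition Fv :: "nat \<Rightarrow> nat \<Rightarrow> nat \<Rightarrow> real" where
  "Fv K i' n = L i' powr (real_of_int (2 * (int (m K) + Bc i')) - real n)"

lemma v_pw:
  assumes i: "i \<in> {1..N}"
  shows "\<bar>v K i b\<bar> \<le> Fv K i (nn K) * \<bar>z K i (b + - (int (nn K) * int (d i)))\<bar>"
proof (cases "z K i (b - int (nn K) * int (d i)) = 0")
  case True then show ?thesis by (simp add: v_def)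
next
  case False
  define r where "r = b - int (nn K) * int (d i)"
  have r: "\<bar>r\<bar> \<le> int (m K)" using zsupp False by (simp add: r_def)
  have br: "b = r + int (nn K) * int (d i)" by (simp add: r_def)
  have "E i r - E i b \<le> 2 * (int (m K) + Bc i) - int (nn K)"
    using Ef_diff1[OF dpos[OF i] r, of "l i" "nn K"] br by (simp add: Bc_def)
  then have "L i powr real_of_int (E i r - E i b) \<le> Fv K i (nn K)"
    unfolding Fv_def by (intro L_powr_mono[OF i]) linarith
  then show ?thesis using i
    by (simp add: v_def r_def[symmetric] abs_mult abs_lam_powi mult_right_mono)
qed

lemma v_lp: "v K i \<in> lp p" "Phi p (v K i) \<le> (Fv K i (nn K)) powr p * Phz K i"
proof -
  have "v K i \<in> lp p \<and> Phi p (v K i) \<le> (Fv K i (nn K)) powr p * Phz K i"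
  proof (cases "i \<in> {1..N}")
    case True
    note r = lp_shift_bound[OF z_lp _ _ v_pw[OF True]]
    then show ?thesis using p1 by (auto simp: Fv_def Phz_def)
  next
    case False
    then have v0: "v K i = (\<lambda>_. 0)" by (auto simp: v_def)
    have "(\<lambda>_::int. 0::real) \<in> lp p" "Phi p (\<lambda>_::int. 0::real) = 0"
      using lp_finite_support[of "\<lambda>_::int. 0::real" 0 p] by auto
    moreover have "0 \<le> (Fv K i (nn K)) powr p * Phz K i" by (simp add: Phz_def Phi_nonneg)
    ultimately show ?thesis using v0 by simp
  qed
  then show "v K i \<in> lp p" "Phi p (v K i) \<le> (Fv K i (nn K)) powr p * Phz K i" by auto
qed

lemma v_zero: "i \<notin> {1..N} \<Longrightarrow> v K i = (\<lambda>_. 0)" by (auto simp: v_def)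

lemma Phi_zero: "Phi p (\<lambda>_. 0) = 0" by (simp add: Phi_def)

lemma T_v_small:
  assumes i: "i \<in> {1..N}" and n: "n \<le> prevn K"
  shows "Phi p ((T i ^^ n) (v K i')) \<le> (1/4)^K / N"
proof (cases "i' \<in> {1..N}")
  case False
  have "(T i ^^ n) (v K i') = (\<lambda>_. 0)" by (rule ext) (simp add: T_pow[OF i] v_zero[OF False])
  then show ?thesis by (simp add: Phi_zero)
next
  case True
  have G: "(Fv K i' (nn K)) powr p * (Phz K i' * (L i powr real (prevn K)) powr p) \<le> (1/4)^K / N"
    using Good_nn[of K] i True by (simp add: Good_def Fv_def)
  have "Phi p ((T i ^^ n) (v K i')) \<le> (L i powr real n) powr p * Phi p (v K i')"
    by (rule T_bound(2)[OF i v_lp(1)])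
  also have "\<dots> \<le> (L i powr real (prevn K)) powr p * ((Fv K i' (nn K)) powr p * Phz K i')"
  proof (rule mult_mono)
    show "(L i powr real n) powr p \<le> (L i powr real (prevn K)) powr p"
      using n p1 by (intro powr_mono2 L_powr_mono[OF i]) auto
  qed (use v_lp(2) in \<open>auto simp: Phi_nonneg\<close>)
  also have "\<dots> \<le> (1/4)^K / N" using G by (simp add: mult_ac)
  finally show ?thesis .
qed

lemma v_small: "Phi p (v K i') \<le> (1/4)^K / N"
  using T_v_small[of 1 0 K i'] N1 by simp

lemma T_v_self:
  assumes i: "i \<in> {1..N}"
  shows "(T i ^^ nn K) (v K i) = z K i"
proof
  fix j
  define X where "X = int (nn K) * int (d i)"
  have "(T i ^^ nn K) (v K i) j = lam i powi (E i (j + X) - E i j) * v K i (j + X)"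
    by (simp add: T_pow[OF i] X_def)
  also have "\<dots> = (lam i powi (E i (j + X) - E i j) * lam i powi (- (E i (j + X) - E i j))) * z K i j"
    using i by (simp add: v_def X_def[symmetric])
  also have "lam i powi (E i (j + X) - E i j) * lam i powi (- (E i (j + X) - E i j)) = 1"
    using lam0[OF i] by (subst power_int_add[symmetric]) auto
  finally show "(T i ^^ nn K) (v K i) j = z K i j" by simp
qed

definition vv :: "nat \<times> nat \<Rightarrow> int \<Rightarrow> real" where "vv a = v (fst a) (snd a)"

definition xx :: "int \<Rightarrow> real" where
  "xx b = (if \<exists>a. vv a b \<noteq> 0 then vv (SOME a. vv a b \<noteq> 0) b else 0)"

lemma xx_v: "vv a b \<noteq> 0 \<Longrightarrow> xx b = vv a b"
proof -
  assume a: "vv a b \<noteq> 0"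
  then have s: "vv (SOME a. vv a b \<noteq> 0) b \<noteq> 0" by (rule someI)
  have "fst (SOME a. vv a b \<noteq> 0) = fst a \<and> snd (SOME a. vv a b \<noteq> 0) = snd a"
    using v_disj[OF s[unfolded vv_def] a[unfolded vv_def]] by (simp add: vv_def)
  then have "(SOME a. vv a b \<noteq> 0) = a" by (simp add: prod_eq_iff)
  moreover have "\<exists>a. vv a b \<noteq> 0" using a by blast
  ultimately show ?thesis unfolding xx_def by (simp only: if_True)
qed

lemma xx_nz: "xx b \<noteq> 0 \<Longrightarrow> \<exists>a. xx b = vv a b"
proof -
  assume "xx b \<noteq> 0"
  then have "\<exists>a. vv a b \<noteq> 0" by (auto simp: xx_def split: if_splits)
  then have "xx b = vv (SOME a. vv a b \<noteq> 0) b" by (simp add: xx_def)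
  then show ?thesis by blast
qed

lemma sum_vv_le: "finite A \<Longrightarrow> (\<Sum>a\<in>A. Phi p (vv a)) \<le> 2"
proof -
  assume A: "finite A"
  have "(\<Sum>a\<in>A. Phi p (vv a)) \<le> (\<Sum>k\<in>fst ` A. real N * ((1/4)^k / N))"
    by (rule sum_blocks[OF A]) (auto simp: vv_def Phi_nonneg v_zero Phi_zero v_small)
  also have "\<dots> = (\<Sum>k\<in>fst ` A. (1/4)^k)" using N1 by simp
  also have "\<dots> \<le> 2" by (rule geom_quarter) (use A in auto)
  finally show ?thesis .
qed

lemma xx_lp: "xx \<in> lp p"
proof (rule lp_disjoint_sum(1)[where B=UNIV and v=vv and S=2])
  show "vv a \<in> lp p" for a by (simp add: vv_def v_lp)
  show "(\<Sum>a\<in>A. Phi p (vv a)) \<le> 2" if "finite A" "A \<subseteq> UNIV" for A using sum_vv_le that by simp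
  show "\<exists>a\<in>UNIV. xx j = vv a j" if "xx j \<noteq> 0" for j using xx_nz[OF that] by simp
qed

end



context hc_setup
begin

definition Fd :: "nat \<Rightarrow> nat \<Rightarrow> real" where
  "Fd K i = L i powr (real_of_int (2 * PP K (prevn K) + 2 * Bc i) - real (nn K))"

lemma early_bound:
  assumes i: "i \<in> {1..N}" and k: "k < K"
  shows "Phi p ((T i ^^ nn K) (v k i')) \<le> (Fd K i) powr p * Phi p (v k i')"
proof -
  define X where "X = int (nn K) * int (d i)"
  have pw: "\<bar>(T i ^^ nn K) (v k i') j\<bar> \<le> Fd K i * \<bar>v k i' (j + X)\<bar>" for j
  proof (cases "v k i' (j + X) = 0")
    case True then show ?thesis by (simp add: T_pow[OF i] X_def)
  next
    case False
    define b where "b = j + X"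
    have b1: "PP k (prevn k) < b" "b \<le> Pend k" using v_range[OF False] by (auto simp: b_def)
    have b0: "0 \<le> b" using b1 PP_nonneg[of k "prevn k"] by linarith
    have bP: "b \<le> PP K (prevn K)" using b1 Pend_le[OF k] by linarith
    have jb: "j = b - X" by (simp add: b_def)
    have "E i b - E i (b - X) \<le> 2 * PP K (prevn K) + 2 * Bc i - int (nn K)"
      using Ef_diff2[OF dpos[OF i] b0 bP, of "l i" "nn K"] by (simp add: X_def Bc_def)
    then have le: "L i powr real_of_int (E i b - E i (b - X)) \<le> Fd K i"
      unfolding Fd_def by (intro L_powr_mono[OF i]) linarith
    have "\<bar>(T i ^^ nn K) (v k i') j\<bar> = L i powr real_of_int (E i b - E i (b - X)) * \<bar>v k i' b\<bar>"
      by (simp add: T_pow[OF i] abs_mult abs_lam_powi[OF i] X_def[symmetric] b_def)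
    also have "\<dots> \<le> Fd K i * \<bar>v k i' b\<bar>" by (rule mult_right_mono[OF le]) simp
    finally show ?thesis by (simp add: b_def)
  qed
  have "Fd K i \<ge> 0" by (simp add: Fd_def)
  from lp_shift_bound(2)[OF v_lp(1) _ this pw] p1 show ?thesis by simp
qed

lemma cross_lt:
  assumes i: "i \<in> {1..N}" and i': "i' \<in> {1..N}" and lt: "i < i'"
  shows "Phi p ((T i ^^ nn K) (v K i')) \<le> (1/2)^K / N"
proof -
  define X where "X = int (nn K) * int (d i)"
  define X' where "X' = int (nn K) * int (d i')"
  define F where "F = L i powr real (nn K) * Fv K i' (nn K)"
  have pw: "\<bar>(T i ^^ nn K) (v K i') j\<bar> \<le> F * \<bar>z K i' (j + (X - X'))\<bar>" for j
  proof -
    have "\<bar>(T i ^^ nn K) (v K i') j\<bar> \<le> L i powr real (nn K) * \<bar>v K i' (j + X)\<bar>"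
      using T_pw[OF i] by (simp add: X_def)
    also have "\<dots> \<le> L i powr real (nn K) * (Fv K i' (nn K) * \<bar>z K i' (j + X + - X')\<bar>)"
      by (rule mult_left_mono) (use v_pw[OF i', of K "j + X"] in \<open>auto simp: X'_def\<close>)
    finally show ?thesis by (simp add: F_def algebra_simps)
  qed
  have F0: "F \<ge> 0" by (simp add: F_def Fv_def)
  have "Phi p ((T i ^^ nn K) (v K i')) \<le> F powr p * Phi p (z K i')"
    using lp_shift_bound(2)[OF z_lp _ F0 pw] p1 by simp
  also have "\<dots> \<le> (1/2)^K / N"
  proof -
    have "(L i powr real (nn K) * L i' powr (real_of_int (2 * (int (m K) + Bc i')) - real (nn K))) powr p * Phz K i' \<le> (1/2)^K / N"
      using Good_nn[of K] i i' lt unfolding Good_def by blast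
    then show ?thesis by (simp add: F_def Fv_def Phz_def)
  qed
  finally show ?thesis .
qed

lemma cross_gt:
  assumes i: "i \<in> {1..N}" and i': "i' \<in> {1..N}" and gt: "i' < i"
  shows "Phi p ((T i ^^ nn K) (v K i')) \<le> (1/2)^K / N"
proof -
  define X where "X = int (nn K) * int (d i)"
  define X' where "X' = int (nn K) * int (d i')"
  define F where "F = Fv K i' (nn K)"
  have F0: "F \<ge> 0" by (simp add: F_def Fv_def)
  have G4: "2 * int (m K) + 2 * Bc i \<le> int (nn K)" using Good_nn[of K] i by (simp add: Good_def)
  have pw: "\<bar>(T i ^^ nn K) (v K i') j\<bar> \<le> F * \<bar>z K i' (j + (X - X'))\<bar>" for j
  proof (cases "z K i' (j + X - X') = 0")
    case True
    have "(T i ^^ nn K) (v K i') j = 0" using True by (simp add: T_pow[OF i] v_def X_def X'_def)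
    then show ?thesis using F0 by simp
  next
    case False
    define r where "r = j + X - X'"
    have r: "\<bar>r\<bar> \<le> int (m K)" using zsupp False by (simp add: r_def)
    have jr: "j + X = r + X'" "j = r + X' - X" by (simp_all add: r_def)
    have "E i (r + X') - E i (r + X' - X) \<le> 0"
      using Ef_diff3[OF dpos[OF i] r dgrow[OF i' i gt], of "l i" "nn K"] G4
      by (simp add: X_def X'_def Bc_def)
    then have le1: "L i powr real_of_int (E i (r + X') - E i (r + X' - X)) \<le> 1"
      using L_powr_mono[OF i, of "real_of_int (E i (r + X') - E i (r + X' - X))" 0] L1[OF i] by simp
    have "\<bar>(T i ^^ nn K) (v K i') j\<bar> = L i powr real_of_int (E i (r + X') - E i (r + X' - X)) * \<bar>v K i' (r + X')\<bar>"
      by (simp add: T_pow[OF i] abs_mult abs_lam_powi[OF i] X_def[symmetric] jr)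
    also have "\<dots> \<le> 1 * \<bar>v K i' (r + X')\<bar>" by (rule mult_right_mono[OF le1]) simp
    also have "\<dots> \<le> F * \<bar>z K i' r\<bar>" using v_pw[OF i', of K "r + X'"] by (simp add: F_def X'_def)
    finally show ?thesis by (simp add: r_def algebra_simps)
  qed
  have "Phi p ((T i ^^ nn K) (v K i')) \<le> F powr p * Phi p (z K i')"
    using lp_shift_bound(2)[OF z_lp _ F0 pw] p1 by simp
  also have "\<dots> \<le> (1/2)^K / N"
  proof -
    have "(L i' powr (real_of_int (2 * (int (m K) + Bc i')) - real (nn K))) powr p * Phz K i' \<le> (1/2)^K / N"
      using Good_nn[of K] i i' gt unfolding Good_def by blast
    then show ?thesis by (simp add: F_def Fv_def Phz_def)
  qed
  finally show ?thesis .
qed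

end



context hc_setup
begin

lemma T_zero: "i \<in> {1..N} \<Longrightarrow> (T i ^^ n) (\<lambda>_. 0) = (\<lambda>_. 0)"
  by (rule ext) (simp add: T_pow)

lemma err:
  assumes i: "i \<in> {1..N}"
  shows "(\<lambda>j. (T i ^^ nn K) xx j - z K i j) \<in> lp p"
    "Phi p (\<lambda>j. (T i ^^ nn K) xx j - z K i j) \<le> 3 * (1/2)^K"
proof -
  define n where "n = nn K"
  define X where "X = int n * int (d i)"
  define f where "f a = Phi p ((T i ^^ n) (vv a))" for a
  define B where "B = UNIV - {(K, i)}"
  have f0: "f a \<ge> 0" for a by (simp add: f_def Phi_nonneg)
  have vlp: "(T i ^^ n) (vv a) \<in> lp p" for a
    by (rule T_bound(1)[OF i]) (simp add: vv_def v_lp)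
  have cond: "\<exists>a\<in>B. (T i ^^ nn K) xx j - z K i j = (T i ^^ n) (vv a) j"
    if ne: "(T i ^^ nn K) xx j - z K i j \<noteq> 0" for j
  proof -
    define b where "b = j + X"
    define c where "c = lam i powi (E i (j + X) - E i j)"
    have Tx: "(T i ^^ nn K) xx j = c * xx b" by (simp add: T_pow[OF i] c_def b_def X_def n_def)
    have zj: "z K i j = c * v K i b"
      using fun_cong[OF T_v_self[OF i, of K], of j] by (simp add: T_pow[OF i] c_def b_def X_def n_def)
    have Tv: "(T i ^^ n) (vv a) j = c * vv a b" for a
      by (simp add: T_pow[OF i] c_def b_def X_def n_def)
    show ?thesis
    proof (cases "v K i b = 0")
      case False
      then have "xx b = v K i b" using xx_v[of "(K, i)" b] by (simp add: vv_def)
      then show ?thesis using ne Tx zj by simp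
    next
      case True
      then have "xx b \<noteq> 0" using ne Tx zj by auto
      then obtain a where a: "xx b = vv a b" using xx_nz by blast
      have "a \<noteq> (K, i)" using a True \<open>xx b \<noteq> 0\<close> by (auto simp: vv_def)
      then have aB: "a \<in> B" by (simp add: B_def)
      have "(T i ^^ nn K) xx j - z K i j = (T i ^^ n) (vv a) j" using Tx zj True a Tv[of a] by simp
      then show ?thesis using aB by blast
    qed
  qed
  have sums: "(\<Sum>a\<in>A. f a) \<le> 3 * (1/2)^K" if A: "finite A" "A \<subseteq> B" for A
  proof -
    define A1 where "A1 = {a\<in>A. fst a < K}"
    define A2 where "A2 = {a\<in>A. fst a = K}"
    define A3 where "A3 = {a\<in>A. K < fst a}"
    have fin: "finite A1" "finite A2" "finite A3" using A by (auto simp: A1_def A2_def A3_def)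
    have "A = A1 \<union> (A2 \<union> A3)" by (auto simp: A1_def A2_def A3_def)
    moreover have "(\<Sum>a\<in>A2 \<union> A3. f a) = (\<Sum>a\<in>A2. f a) + (\<Sum>a\<in>A3. f a)"
      by (rule sum.union_disjoint) (use fin in \<open>auto simp: A2_def A3_def\<close>)
    moreover have "(\<Sum>a\<in>A1 \<union> (A2 \<union> A3). f a) = (\<Sum>a\<in>A1. f a) + (\<Sum>a\<in>A2 \<union> A3. f a)"
      by (rule sum.union_disjoint) (use fin in \<open>auto simp: A1_def A2_def A3_def\<close>)
    ultimately have "(\<Sum>a\<in>A. f a) = (\<Sum>a\<in>A1. f a) + ((\<Sum>a\<in>A2. f a) + (\<Sum>a\<in>A3. f a))"
      by simp
    also have "(\<Sum>a\<in>A1. f a) \<le> (1/2)^K"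
    proof -
      have "(\<Sum>a\<in>A1. f a) \<le> (\<Sum>a\<in>A1. (Fd K i) powr p * Phi p (vv a))"
        by (rule sum_mono) (use early_bound[OF i] in \<open>auto simp: A1_def f_def vv_def n_def\<close>)
      also have "\<dots> = (Fd K i) powr p * (\<Sum>a\<in>A1. Phi p (vv a))" by (simp add: sum_distrib_left)
      also have "\<dots> \<le> (Fd K i) powr p * 2" by (intro mult_left_mono sum_vv_le fin) simp
      also have "\<dots> \<le> (1/2)^K"
        using Good_nn[of K] i unfolding Good_def Fd_def by blast
      finally show ?thesis .
    qed
    also have "(\<Sum>a\<in>A2. f a) \<le> (1/2)^K"
    proof -
      have "(\<Sum>a\<in>A2. f a) \<le> (\<Sum>k\<in>fst ` A2. real N * ((1/2)^k / N))"
      proof (rule sum_blocks[OF fin(2) f0])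
        fix a assume a: "a \<in> A2"
        then obtain i' where a': "a = (K, i')" "i' \<noteq> i" using A by (cases a) (auto simp: A2_def B_def)
        show "snd a \<notin> {1..N} \<Longrightarrow> f a = 0"
          using a' by (simp add: f_def vv_def v_zero Phi_zero T_zero[OF i])
        show "f a \<le> (1/2)^(fst a) / N"
        proof (cases "i' \<in> {1..N}")
          case False then show ?thesis using a' by (simp add: f_def vv_def v_zero Phi_zero T_zero[OF i])
        next
          case True
          then consider "i < i'" | "i' < i" using a' by linarith
          then show ?thesis
            using cross_lt[OF i True] cross_gt[OF i True] a' by cases (auto simp: f_def vv_def n_def)
        qed
      qed
      also have "\<dots> \<le> (1/2)^K"
      proof -
        have sub: "fst ` A2 \<subseteq> {K}" by (auto simp: A2_def)
        have "(\<Sum>k\<in>fst ` A2. real N * ((1/2)^k / N)) \<le> (\<Sum>k\<in>{K}. real N * ((1/2)^k / N))"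
          by (rule sum_mono2[OF _ sub]) auto
        then show ?thesis using N1 by simp
      qed
      finally show ?thesis .
    qed
    also have "(\<Sum>a\<in>A3. f a) \<le> (1/2)^K"
    proof -
      have "(\<Sum>a\<in>A3. f a) \<le> (\<Sum>k\<in>fst ` A3. real N * ((1/4)^k / N))"
      proof (rule sum_blocks[OF fin(3) f0])
        fix a assume a: "a \<in> A3"
        show "snd a \<notin> {1..N} \<Longrightarrow> f a = 0"
          by (simp add: f_def vv_def v_zero Phi_zero T_zero[OF i])
        have "n \<le> prevn (fst a)" using a prevn_ge[of K "fst a"] by (simp add: A3_def n_def)
        then show "f a \<le> (1/4)^(fst a) / N"
          using T_v_small[OF i] by (simp add: f_def vv_def)
      qed
      also have "\<dots> = (\<Sum>k\<in>fst ` A3. (1/4)^k)" using N1 by simp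
      also have "\<dots> \<le> (1/2)^K" by (rule geom_quarter_tail) (use fin in \<open>auto simp: A3_def\<close>)
      finally show ?thesis .
    qed
    finally show ?thesis by simp
  qed
  note r = lp_disjoint_sum[where B=B and v="\<lambda>a. (T i ^^ n) (vv a)" and S="3 * (1/2)^K"
      and u="\<lambda>j. (T i ^^ nn K) xx j - z K i j"]
  show "(\<lambda>j. (T i ^^ nn K) xx j - z K i j) \<in> lp p"
    by (rule r(1)) (use vlp sums cond in \<open>auto simp: f_def\<close>)
  show "Phi p (\<lambda>j. (T i ^^ nn K) xx j - z K i j) \<le> 3 * (1/2)^K"
    by (rule r(2)) (use vlp sums cond in \<open>auto simp: f_def\<close>)
qed

end



lemma tail_small:
  fixes h :: "int \<Rightarrow> real"
  assumes hs: "h summable_on UNIV" and h0: "\<And>j. h j \<ge> 0" and e: "e > 0"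
  shows "\<exists>F. finite F \<and> (\<forall>S. F \<subseteq> S \<longrightarrow> infsum h (- S) \<le> e)"
proof -
  obtain F where F: "finite F" "dist (sum h F) (infsum h UNIV) \<le> e"
    using infsum_finite_approximation[OF hs e] by auto
  have "infsum h (- S) \<le> e" if FS: "F \<subseteq> S" for S
  proof -
    have s1: "h summable_on S" by (rule summable_on_subset[OF hs]) simp
    have s2: "h summable_on (- S)" by (rule summable_on_subset[OF hs]) simp
    have "infsum h UNIV = infsum h (S \<union> - S)" by simp
    also have "\<dots> = infsum h S + infsum h (- S)" by (rule infsum_Un_disjoint[OF s1 s2]) auto
    finally have eq: "infsum h UNIV = infsum h S + infsum h (- S)" .
    have "sum h F \<le> infsum h S" by (rule finite_sum_le_infsum[OF s1 F(1) FS]) (use h0 in auto)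
    then show ?thesis using eq F(2) by (simp add: dist_real_def)
  qed
  then show ?thesis using F(1) by blast
qed

definition tgt :: "nat \<times> rat list list \<Rightarrow> nat \<Rightarrow> int \<Rightarrow> real" where
  "tgt D i j = (if \<bar>j\<bar> \<le> int (fst D) then of_rat (snd D ! i ! nat (j + int (fst D))) else 0)"

lemma tgt_supp: "tgt D i j \<noteq> 0 \<Longrightarrow> \<bar>j\<bar> \<le> int (fst D)"
  by (auto simp: tgt_def split: if_splits)

lemma density:
  fixes y :: "nat \<Rightarrow> int \<Rightarrow> real"
  assumes y: "\<And>i. i \<in> {1..N} \<Longrightarrow> y i \<in> lp p" and p: "p > 0" and eta: "\<eta> > 0"
  shows "\<exists>D. \<forall>i\<in>{1..N}. Phi p (\<lambda>j. tgt D i j - y i j) < \<eta>"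
proof -
  have "\<forall>i\<in>{1..N}. \<exists>F. finite F \<and> (\<forall>S. F \<subseteq> S \<longrightarrow> infsum (\<lambda>j. \<bar>y i j\<bar> powr p) (- S) \<le> \<eta> / 4)"
    using y eta by (intro ballI tail_small) (auto simp: lp_def)
  then obtain Fi where Fi: "\<And>i. i \<in> {1..N} \<Longrightarrow> finite (Fi i) \<and>
      (\<forall>S. Fi i \<subseteq> S \<longrightarrow> infsum (\<lambda>j. \<bar>y i j\<bar> powr p) (- S) \<le> \<eta> / 4)"
    by metis
  define F where "F = (\<Union>i\<in>{1..N}. Fi i)"
  have fF: "finite F" using Fi by (auto simp: F_def)
  define M :: nat where "M = nat (Max (insert 0 (abs ` F)))"
  have M: "\<bar>j\<bar> \<le> int M" if "j \<in> F" for j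
  proof -
    have "\<bar>j\<bar> \<le> Max (insert 0 (abs ` F))" using that fF by (intro Max_ge) auto
    moreover have "0 \<le> Max (insert 0 (abs ` F))" using fF by (intro Max_ge) auto
    ultimately show ?thesis by (simp add: M_def)
  qed
  define S where "S = {- int M..int M}"
  have FS: "Fi i \<subseteq> S" if "i \<in> {1..N}" for i using M that by (force simp: F_def S_def)
  define \<delta> where "\<delta> = \<eta> / (2 * (2 * real M + 1))"
  have \<delta>: "\<delta> > 0" using eta by (simp add: \<delta>_def)
  have "\<forall>i j. \<exists>q. \<bar>of_rat q - y i j\<bar> powr p < \<delta>"
  proof (intro allI)
    fix i j
    define e where "e = \<delta> powr (1 / p)"
    have e: "e > 0" using \<delta> by (simp add: e_def)
    obtain r where r: "r \<in> \<rat>" "y i j - e < r" "r < y i j + e"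
      using Rats_dense_in_real[of "y i j - e" "y i j + e"] e by auto
    obtain q where q: "r = of_rat q" using r(1) Rats_cases by blast
    have "\<bar>of_rat q - y i j\<bar> < e" using r q by auto
    then have "\<bar>of_rat q - y i j\<bar> powr p < e powr p" using p by (intro powr_less_mono2) auto
    also have "e powr p = \<delta>" using \<delta> p by (simp add: e_def powr_powr)
    finally show "\<exists>q. \<bar>of_rat q - y i j\<bar> powr p < \<delta>" by blast
  qed
  then obtain qf where qf: "\<And>i j. \<bar>of_rat (qf i j) - y i j\<bar> powr p < \<delta>" by metis
  define D where "D = (M, map (\<lambda>i. map (\<lambda>t. qf i (int t - int M)) [0..<2*M+1]) [0..<N+1])"
  have tgtD: "tgt D i j = (if j \<in> S then of_rat (qf i j) else 0)" if i: "i \<in> {1..N}" for i j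
  proof (cases "j \<in> S")
    case True
    then have "\<bar>j\<bar> \<le> int M" "nat (j + int M) < 2 * M + 1" "0 \<le> j + int M" by (auto simp: S_def)
    then show ?thesis using True i by (simp add: tgt_def D_def del: upt_Suc)
  next
    case False
    then show ?thesis by (auto simp: tgt_def D_def S_def)
  qed
  have "Phi p (\<lambda>j. tgt D i j - y i j) < \<eta>" if i: "i \<in> {1..N}" for i
  proof -
    define g where "g j = (if j \<in> S then \<delta> else \<bar>y i j\<bar> powr p)" for j
    have ys: "(\<lambda>j. \<bar>y i j\<bar> powr p) summable_on UNIV" using y[OF i] by (simp add: lp_def)
    have gS: "g summable_on S" by (simp add: S_def)
    have gS': "g summable_on (- S)"
    proof -
      have "(\<lambda>j. \<bar>y i j\<bar> powr p) summable_on (- S)" by (rule summable_on_subset[OF ys]) simp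
      then show ?thesis by (rule summable_on_cong[THEN iffD1, rotated]) (simp add: g_def)
    qed
    have gs: "g summable_on UNIV" using summable_on_Un_disjoint[OF gS gS'] by simp
    have le: "\<bar>tgt D i j - y i j\<bar> powr p \<le> g j" for j
      using qf[of i j] by (auto simp: tgtD[OF i] g_def less_imp_le)
    have "Phi p (\<lambda>j. tgt D i j - y i j) \<le> infsum g UNIV" by (rule lp_compare(2)[OF gs le])
    also have "infsum g UNIV = infsum g S + infsum g (- S)"
      using infsum_Un_disjoint[OF gS gS'] by simp
    also have "infsum g S = (2 * real M + 1) * \<delta>"
    proof -
      have "infsum g S = (\<Sum>j\<in>S. \<delta>)" by (simp add: S_def g_def)
      also have "\<dots> = real (card S) * \<delta>" by simp
      also have "card S = 2 * M + 1" by (simp add: S_def)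
      finally show ?thesis by simp
    qed
    also have "infsum g (- S) = infsum (\<lambda>j. \<bar>y i j\<bar> powr p) (- S)"
      by (rule infsum_cong) (simp add: g_def)
    also have "\<dots> \<le> \<eta> / 4" using Fi[OF i] FS[OF i] by blast
    also have "(2 * real M + 1) * \<delta> = \<eta> / 2"
    proof -
      have "(2 * real M + 1) > 0" by simp
      then show ?thesis unfolding \<delta>_def by (simp add: field_simps)
    qed
    finally show ?thesis using eta by simp
  qed
  then show ?thesis by blast
qed



theorem fwd_dhc:
  fixes p :: real and N :: nat and d :: "nat \<Rightarrow> nat" and l :: "nat \<Rightarrow> int" and lam :: "nat \<Rightarrow> real"
  assumes p1: "1 \<le> p" and N1: "1 \<le> N"
    and dpos: "\<And>i. i \<in> {1..N} \<Longrightarrow> d i > 0"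
    and dgrow: "\<And>s t. s \<in> {1..N} \<Longrightarrow> t \<in> {1..N} \<Longrightarrow> s < t \<Longrightarrow> 2 * d s < d t"
    and lgrow: "\<And>s t. s \<in> {1..N} \<Longrightarrow> t \<in> {1..N} \<Longrightarrow> s < t \<Longrightarrow> \<bar>lam s\<bar> < \<bar>lam t\<bar>"
    and lam1: "\<And>i. i \<in> {1..N} \<Longrightarrow> 1 < \<bar>lam i\<bar>"
  shows "disjoint_hypercyclic_lp p N (\<lambda>i. Sh (d i) (l i) (lam i))"
proof -
  define zz where "zz K = tgt (from_nat (fst (prod_decode K)) :: nat \<times> rat list list)" for K
  define mm where "mm K = fst (from_nat (fst (prod_decode K)) :: nat \<times> rat list list)" for K
  interpret H: hc_setup p N d l lam zz mm
    by unfold_locales (use assms tgt_supp in \<open>auto simp: zz_def mm_def\<close>)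
  have p0: "p > 0" using p1 by simp
  show ?thesis unfolding disjoint_hypercyclic_lp_def
  proof (intro bexI[of _ H.xx] allI impI)
    show "H.xx \<in> lp p" by (rule H.xx_lp)
    fix y :: "nat \<Rightarrow> int \<Rightarrow> real" and \<epsilon> :: real
    assume y: "\<forall>i\<in>{1..N}. y i \<in> lp p" and eps: "\<epsilon> > 0"
    define \<eta> where "\<eta> = \<epsilon> powr p / (2 * 2 powr p)"
    have eta: "\<eta> > 0" using eps by (simp add: \<eta>_def)
    obtain D where D: "\<forall>i\<in>{1..N}. Phi p (\<lambda>j. tgt D i j - y i j) < \<eta>"
      using density[of N y p \<eta>] y p0 eta by blast
    obtain b where b: "(1/2::real)^b < \<eta> / 3" using real_arch_pow_inv[of "\<eta> / 3" "1/2"] eta by auto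
    define K where "K = prod_encode (to_nat D, b)"
    have zzK: "zz K = tgt D" by (simp add: zz_def K_def)
    have bK: "b \<le> K" by (simp add: K_def le_prod_encode_2)
    have "lp_norm p ((Sh (d i) (l i) (lam i) ^^ H.nn K) H.xx - y i) < \<epsilon>" if i: "i \<in> {1..N}" for i
    proof -
      define u where "u j = (Sh (d i) (l i) (lam i) ^^ H.nn K) H.xx j - zz K i j" for j
      define w where "w j = tgt D i j - y i j" for j
      have ulp: "u \<in> lp p" and uPhi: "Phi p u \<le> 3 * (1/2)^K"
        using H.err[OF i, of K] by (simp_all add: u_def[abs_def])
      have "(1/2::real)^K \<le> (1/2)^b" using bK by (intro power_decreasing) auto
      then have uP: "Phi p u < \<eta>" using uPhi b by linarith
      have tlp: "tgt D i \<in> lp p" by (rule lp_finite_support(1)[where m="int (fst D)"]) (use tgt_supp in auto)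
      have ylp: "(\<lambda>j. - y i j) \<in> lp p" using y i by (simp add: lp_def)
      have wlp: "w \<in> lp p" using lp_quasi_triangle(1)[OF tlp ylp] p0 by (simp add: w_def[abs_def])
      have wP: "Phi p w < \<eta>" using D i by (simp add: w_def[abs_def])
      have eq: "(Sh (d i) (l i) (lam i) ^^ H.nn K) H.xx - y i = (\<lambda>j. u j + w j)"
        by (rule ext) (simp add: u_def w_def zzK)
      have "Phi p (\<lambda>j. u j + w j) \<le> 2 powr p * (Phi p u + Phi p w)"
        by (rule lp_quasi_triangle(2)[OF ulp wlp]) (use p0 in simp)
      also have "\<dots> < 2 powr p * (2 * \<eta>)" using uP wP by (intro mult_strict_left_mono) auto
      also have "\<dots> = \<epsilon> powr p" by (simp add: \<eta>_def)
      finally have lt: "Phi p (\<lambda>j. u j + w j) < \<epsilon> powr p" .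
      have "lp_norm p (\<lambda>j. u j + w j) = Phi p (\<lambda>j. u j + w j) powr (1/p)" by (rule lp_norm_Phi)
      also have "\<dots> < (\<epsilon> powr p) powr (1/p)"
        by (rule powr_less_mono2) (use lt p0 Phi_nonneg in auto)
      also have "\<dots> = \<epsilon>" using eps p0 by (simp add: powr_powr)
      finally show ?thesis using eq by simp
    qed
    then show "\<exists>n. \<forall>i\<in>{1..N}. lp_norm p ((Sh (d i) (l i) (lam i) ^^ n) H.xx - y i) < \<epsilon>" by blast
  qed
qed



definition Rf :: "(int \<Rightarrow> real) \<Rightarrow> (int \<Rightarrow> real)" where "Rf x = (\<lambda>j. x (- j))"

definition Si :: "nat \<Rightarrow> int \<Rightarrow> real \<Rightarrow> (int \<Rightarrow> real) \<Rightarrow> (int \<Rightarrow> real)" where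
  "Si d l lam x = (\<lambda>j. x (j - int d) / Wt l lam j)"

lemma Rf_Rf [simp]: "Rf (Rf x) = x" by (simp add: Rf_def)

lemma Rf_Phi: "Phi p (Rf x) = Phi p x"
proof -
  have b: "bij_betw uminus (UNIV::int set) UNIV" by (rule bij_betwI[where g=uminus]) auto
  show ?thesis unfolding Phi_def Rf_def using infsum_reindex_bij_betw[OF b, of "\<lambda>j. \<bar>x j\<bar> powr p"] by simp
qed

lemma Rf_lp: "x \<in> lp p \<Longrightarrow> Rf x \<in> lp p"
proof -
  assume x: "x \<in> lp p"
  have b: "bij_betw uminus (UNIV::int set) UNIV" by (rule bij_betwI[where g=uminus]) auto
  show ?thesis using x summable_on_reindex_bij_betw[OF b, of "\<lambda>j. \<bar>x j\<bar> powr p"]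
    by (simp add: lp_def Rf_def)
qed

lemma Wt_abs: "1 \<le> \<bar>lam\<bar> \<Longrightarrow> \<bar>Wt l lam j\<bar> \<le> \<bar>lam\<bar>"
proof -
  assume a: "1 \<le> \<bar>lam\<bar>"
  have "\<bar>1 / lam\<bar> \<le> 1" using a by (simp add: abs_divide divide_le_eq_1)
  then have "\<bar>1 / lam\<bar> \<le> \<bar>lam\<bar>" using a by linarith
  then show ?thesis using a by (auto simp: Wt_def simp del: abs_divide)
qed

lemma Wt_nz: "lam \<noteq> 0 \<Longrightarrow> Wt l lam j \<noteq> 0" by (simp add: Wt_def)

lemma Sh_lp:
  assumes "x \<in> lp p" "1 \<le> \<bar>lam\<bar>" "p \<ge> 0"
  shows "Sh d l lam x \<in> lp p" "Phi p (Sh d l lam x) \<le> \<bar>lam\<bar> powr p * Phi p x"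
proof -
  have pw: "\<bar>Sh d l lam x j\<bar> \<le> \<bar>lam\<bar> * \<bar>x (j + int d)\<bar>" for j
    unfolding Sh_def abs_mult by (rule mult_right_mono[OF Wt_abs[OF assms(2)]]) simp
  note r = lp_shift_bound[OF assms(1) assms(3) _ pw]
  show "Sh d l lam x \<in> lp p" "Phi p (Sh d l lam x) \<le> \<bar>lam\<bar> powr p * Phi p x" using r by auto
qed

lemma Sh_pow_lp: "x \<in> lp p \<Longrightarrow> 1 \<le> \<bar>lam\<bar> \<Longrightarrow> p \<ge> 0 \<Longrightarrow> (Sh d l lam ^^ n) x \<in> lp p"
  by (induction n) (auto intro: Sh_lp)

lemma Si_eq:
  assumes "lam \<noteq> 0"
  shows "Si d l lam x = Rf (Sh d (int d - l - 1) lam (Rf x))"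
proof
  fix j
  have "Wt (int d - l - 1) lam (- j + int d) = 1 / Wt l lam j" by (auto simp: Wt_def)
  then show "Si d l lam x j = Rf (Sh d (int d - l - 1) lam (Rf x)) j"
    by (simp add: Si_def Rf_def Sh_def)
qed

lemma Si_Sh: "lam \<noteq> 0 \<Longrightarrow> Si d l lam (Sh d l lam x) = x"
  by (rule ext) (simp add: Si_def Sh_def Wt_nz)

lemma Sh_Si: "lam \<noteq> 0 \<Longrightarrow> Sh d l lam (Si d l lam x) = x"
  by (rule ext) (simp add: Si_def Sh_def Wt_nz)

lemma Si_lp:
  assumes "x \<in> lp p" "1 \<le> \<bar>lam\<bar>" "p \<ge> 0"
  shows "Si d l lam x \<in> lp p" "Phi p (Si d l lam x) \<le> \<bar>lam\<bar> powr p * Phi p x"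
proof -
  have l0: "lam \<noteq> 0" using assms by auto
  note r = Sh_lp[OF Rf_lp[OF assms(1)] assms(2,3), of d "int d - l - 1"]
  show "Si d l lam x \<in> lp p" using r Rf_lp by (simp add: Si_eq[OF l0])
  show "Phi p (Si d l lam x) \<le> \<bar>lam\<bar> powr p * Phi p x" using r by (simp add: Si_eq[OF l0] Rf_Phi)
qed

lemma bl_from_Phi:
  assumes img: "\<And>x. x \<in> lp p \<Longrightarrow> T x \<in> lp p"
    and lin: "\<And>x y a b. T (\<lambda>j. a * x j + b * y j) = (\<lambda>j. a * T x j + b * T y j)"
    and bd: "\<And>x. x \<in> lp p \<Longrightarrow> Phi p (T x) \<le> c powr p * Phi p x"
    and c: "c \<ge> 0" and p: "p > 0"
  shows "bounded_linear_lp p T"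
  unfolding bounded_linear_lp_def
proof (intro conjI)
  show "T ` lp p \<subseteq> lp p" using img by auto
  show "\<forall>x\<in>lp p. \<forall>y\<in>lp p. \<forall>a b. T (\<lambda>j. a * x j + b * y j) = (\<lambda>j. a * T x j + b * T y j)"
    using lin by blast
  show "\<exists>C. \<forall>x\<in>lp p. lp_norm p (T x) \<le> C * lp_norm p x"
  proof (intro exI ballI)
    fix x assume x: "x \<in> lp p"
    have "lp_norm p (T x) = Phi p (T x) powr (1/p)" by (rule lp_norm_Phi)
    also have "\<dots> \<le> (c powr p * Phi p x) powr (1/p)"
      by (rule powr_mono2) (use bd[OF x] p Phi_nonneg in auto)
    also have "\<dots> = c * lp_norm p x"
      using c p by (simp add: powr_mult powr_powr lp_norm_Phi)
    finally show "lp_norm p (T x) \<le> c * lp_norm p x" .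
  qed
qed

lemma Sh_invertible:
  assumes "1 < \<bar>lam\<bar>" "p \<ge> 1"
  shows "invertible_lp p (Sh d l lam)"
proof -
  have l0: "lam \<noteq> 0" using assms by auto
  have p0: "p > 0" "p \<ge> 0" using assms by auto
  have b1: "bounded_linear_lp p (Sh d l lam)"
    by (rule bl_from_Phi[where c="\<bar>lam\<bar>"]) (use Sh_lp assms p0 in \<open>auto simp: Sh_def algebra_simps\<close>)
  have b2: "bounded_linear_lp p (Si d l lam)"
    by (rule bl_from_Phi[where c="\<bar>lam\<bar>"]) (use Si_lp assms p0 in \<open>auto simp: Si_def add_divide_distrib\<close>)
  show ?thesis unfolding invertible_lp_def
    using b1 b2 Si_Sh[OF l0] Sh_Si[OF l0] by blast
qed

lemma inv_pow:
  assumes "1 < \<bar>lam\<bar>" "p \<ge> 1" "y \<in> lp p"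
  shows "(inv_into (lp p) (Sh d l lam) ^^ n) y = Rf ((Sh d (int d - l - 1) lam ^^ n) (Rf y))"
proof (induction n)
  case 0 then show ?case by simp
next
  case (Suc n)
  have l0: "lam \<noteq> 0" using assms by auto
  have inj: "inj_on (Sh d l lam) (lp p)" by (rule inj_on_inverseI[where g="Si d l lam"]) (simp add: Si_Sh[OF l0])
  define u where "u = (Sh d (int d - l - 1) lam ^^ n) (Rf y)"
  have ulp: "u \<in> lp p" unfolding u_def by (rule Sh_pow_lp) (use assms Rf_lp in auto)
  have "(inv_into (lp p) (Sh d l lam) ^^ Suc n) y = inv_into (lp p) (Sh d l lam) (Rf u)"
    using Suc by (simp add: u_def)
  also have "\<dots> = Si d l lam (Rf u)"
    by (rule inv_into_f_eq[OF inj]) (use Si_lp[OF Rf_lp[OF ulp]] assms Sh_Si[OF l0] in auto)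
  also have "\<dots> = Rf ((Sh d (int d - l - 1) lam ^^ Suc n) (Rf y))"
    by (simp add: Si_eq[OF l0] u_def)
  finally show ?case .
qed



theorem theorem2p5:
  fixes p :: real and N :: nat
    and d :: "nat \<Rightarrow> nat" and l :: "nat \<Rightarrow> int" and lam :: "nat \<Rightarrow> real"
    and w :: "nat \<Rightarrow> int \<Rightarrow> real" and T :: "nat \<Rightarrow> (int \<Rightarrow> real) \<Rightarrow> (int \<Rightarrow> real)"
  assumes "1 \<le> p"
    and "N \<ge> 2"
    and "\<forall>i\<in>{1..N}. d i > 0"
    and "\<forall>s\<in>{1..N}. \<forall>t\<in>{1..N}. s < t \<longrightarrow> 2 * d s < d t"
    and "\<forall>s\<in>{1..N}. \<forall>t\<in>{1..N}. s < t \<longrightarrow> 1 < \<bar>lam s\<bar> \<and> \<bar>lam s\<bar> < \<bar>lam t\<bar>"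
    and "\<forall>i n. w i n = (if n > l i then lam i else 1 / lam i)"
    and "\<forall>i. T i = pseudo_shift (\<lambda>n. n + int (d i)) (w i)"
  shows "(\<forall>i\<in>{1..N}. invertible_lp p (T i))
    \<and> disjoint_hypercyclic_lp p N T
    \<and> disjoint_hypercyclic_lp p N (\<lambda>i. inv_into (lp p) (T i))"
proof -
  note p1 = assms(1)
  have N1: "1 \<le> N" using assms(2) by simp
  have dpos: "\<And>i. i \<in> {1..N} \<Longrightarrow> d i > 0" using assms(3) by blast
  have dgrow: "\<And>s t. s \<in> {1..N} \<Longrightarrow> t \<in> {1..N} \<Longrightarrow> s < t \<Longrightarrow> 2 * d s < d t" using assms(4) by blast
  have lgrow: "\<And>s t. s \<in> {1..N} \<Longrightarrow> t \<in> {1..N} \<Longrightarrow> s < t \<Longrightarrow> \<bar>lam s\<bar> < \<bar>lam t\<bar>" using assms(5) by blast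
  have lam1: "1 < \<bar>lam i\<bar>" if i: "i \<in> {1..N}" for i
  proof (cases "i < N")
    case True
    have "N \<in> {1..N}" using N1 by simp
    then show ?thesis using assms(5) i True by blast
  next
    case False
    then have "i = N" using i by auto
    moreover have "1 < \<bar>lam 1\<bar> \<and> \<bar>lam 1\<bar> < \<bar>lam N\<bar>"
    proof -
      have "1 \<in> {1..N}" "N \<in> {1..N}" "(1::nat) < N" using assms(2) by auto
      then show ?thesis using assms(5) by blast
    qed
    ultimately show ?thesis by auto
  qed
  have TS: "T = (\<lambda>i. Sh (d i) (l i) (lam i))"
  proof (intro ext)
    fix i x j
    show "T i x j = Sh (d i) (l i) (lam i) x j"
      using assms(6,7) by (simp add: pseudo_shift_def Sh_def Wt_def)
  qed
  have c1: "\<forall>i\<in>{1..N}. invertible_lp p (T i)"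
    using Sh_invertible lam1 p1 by (simp add: TS)
  have c2: "disjoint_hypercyclic_lp p N T"
    unfolding TS by (rule fwd_dhc[OF p1 N1 dpos dgrow lgrow lam1])
  define l' where "l' i = int (d i) - l i - 1" for i
  have "disjoint_hypercyclic_lp p N (\<lambda>i. Sh (d i) (l' i) (lam i))"
    by (rule fwd_dhc[OF p1 N1 dpos dgrow lgrow lam1])
  then obtain x' where x': "x' \<in> lp p"
    and hx: "\<And>y. (\<forall>i\<in>{1..N}. y i \<in> lp p) \<Longrightarrow> (\<forall>\<epsilon>>0. \<exists>n::nat. \<forall>i\<in>{1..N}.
        lp_norm p ((Sh (d i) (l' i) (lam i) ^^ n) x' - y i) < \<epsilon>)"
    unfolding disjoint_hypercyclic_lp_def by blast
  have c3: "disjoint_hypercyclic_lp p N (\<lambda>i. inv_into (lp p) (T i))"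
    unfolding disjoint_hypercyclic_lp_def
  proof (intro bexI[of _ "Rf x'"] allI impI)
    show "Rf x' \<in> lp p" by (rule Rf_lp[OF x'])
    fix y :: "nat \<Rightarrow> int \<Rightarrow> real" and \<epsilon> :: real
    assume y: "\<forall>i\<in>{1..N}. y i \<in> lp p" and eps: "\<epsilon> > 0"
    have "\<forall>i\<in>{1..N}. Rf (y i) \<in> lp p" using y Rf_lp by blast
    then obtain n where n: "\<forall>i\<in>{1..N}. lp_norm p ((Sh (d i) (l' i) (lam i) ^^ n) x' - Rf (y i)) < \<epsilon>"
      using hx[of "\<lambda>i. Rf (y i)"] eps by blast
    have "lp_norm p ((inv_into (lp p) (T i) ^^ n) (Rf x') - y i) < \<epsilon>" if i: "i \<in> {1..N}" for i
    proof -
      have "(inv_into (lp p) (T i) ^^ n) (Rf x') = Rf ((Sh (d i) (l' i) (lam i) ^^ n) x')"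
        using inv_pow[OF lam1[OF i] p1 Rf_lp[OF x']] by (simp add: TS l'_def)
      then have "(inv_into (lp p) (T i) ^^ n) (Rf x') - y i = Rf ((Sh (d i) (l' i) (lam i) ^^ n) x' - Rf (y i))"
        by (auto simp: Rf_def fun_diff_def)
      then show ?thesis using n i by (simp add: lp_norm_Phi Rf_Phi)
    qed
    then show "\<exists>n. \<forall>i\<in>{1..N}. lp_norm p ((inv_into (lp p) (T i) ^^ n) (Rf x') - y i) < \<epsilon>" by blast
  qed
  show ?thesis using c1 c2 c3 by blast
qed



end
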